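(* Let $p,q\in\mathbb{N}$ be coprime, $k\in\mathbb{N}$ squarefree, $m=-pk$, $n=qk$, and let $P\in E(m,n)(\mathbb{Q})$ be a rational point which is neither the neutral element nor one of the three points of order $2$. Let $(X_0:X_1:X_2:X_3)=\psi(P)\in Q(m,n)(\mathbb{Q})$ (so $X_1\neq0$), put $\alpha=X_2/X_1$, $\beta=X_0/X_1$, $\gamma=X_3/X_1$, so that $\alpha^2=\beta^2-pk$ and $\gamma^2=\beta^2+qk$ (the associated triple of rational squares $\alpha^2\le\beta^2<\gamma^2$ in arithmetic progression of step $k$), and let $\Delta$ be the triangle with sides $a=|\gamma|+|\alpha|$, $b=|\gamma|-|\alpha|$, $c=2|\beta|$, whose angle $\theta$ between the sides $a$ and $b$ satisfies $\cos\theta=(q-p)/(q+p)$. Then the following are equivalent: (i) $P$ has order $4$; (ii) $\alpha^2=0$, i.e. the triple of squares contains $0$; (iii) $a=b$, i.e. $\Delta$ is isosceles with the angle $\theta$ between its two equal sides.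
   Context: $E(m,n)$ is the elliptic curve $y^2=x(x+m)(x+n)$ (projectively $Y^2T=X(X+mT)(X+nT)$ with coordinates $(T:X:Y)$), with neutral element the point at infinity and points of order 2 $(0,0),(-m,0),(-n,0)$. $Q(m,n)\subset\mathbb{P}^3$ is the curve $X_0^2+mX_1^2=X_2^2,\ X_0^2+nX_1^2=X_3^2$. $\psi:E(m,n)\to Q(m,n)$ is the isomorphism of curves extending the rational map $(T:X:Y)\mapsto\bigl(-(X+mT)(Y^2-m(X+nT)^2) : 2Y(X+nT)(X+mT) : -(X+mT)(Y^2+m(X+nT)^2) : -(X+nT)(Y^2+n(X+mT)^2)\bigr)$; it maps the neutral element and the three points of order 2 to the points $(1:0:\pm1:\pm1)$ and all other rational points to points with $X_1\neq0$. *)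

theory Defs
  imports "HOL-Computational_Algebra.Computational_Algebra"
begin

datatype ept = Inf | Aff rat rat

definition on_E :: "rat \<Rightarrow> rat \<Rightarrow> ept \<Rightarrow> bool" where
  "on_E m n P = (case P of Inf \<Rightarrow> True
     | Aff x y \<Rightarrow> y^2 = x * (x + m) * (x + n))"

definition ec_add :: "rat \<Rightarrow> rat \<Rightarrow> ept \<Rightarrow> ept \<Rightarrow> ept" where
  "ec_add m n P Q = (case P of Inf \<Rightarrow> Q | Aff x1 y1 \<Rightarrow>
     (case Q of Inf \<Rightarrow> P | Aff x2 y2 \<Rightarrow>
       (if x1 = x2 \<and> y1 = - y2 then Inf
        else let l = (if x1 = x2 then (3 * x1^2 + 2 * (m + n) * x1 + m * n) / (2 * y1)
                      else (y2 - y1) / (x2 - x1));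
                 x3 = l^2 - (m + n) - x1 - x2;
                 y3 = - (y1 + l * (x3 - x1))
             in Aff x3 y3)))"

fun ec_mult :: "rat \<Rightarrow> rat \<Rightarrow> nat \<Rightarrow> ept \<Rightarrow> ept" where
  "ec_mult m n 0 P = Inf"
| "ec_mult m n (Suc j) P = ec_add m n P (ec_mult m n j P)"

definition ec_has_order :: "rat \<Rightarrow> rat \<Rightarrow> ept \<Rightarrow> nat \<Rightarrow> bool" where
  "ec_has_order m n P d \<longleftrightarrow> 0 < d \<and> ec_mult m n d P = Inf
      \<and> (\<forall>j. 0 < j \<and> j < d \<longrightarrow> ec_mult m n j P \<noteq> Inf)"

text \<open>The map psi : E(m,n) -> Q(m,n), given at an affine point (T:X:Y) = (1:x:y)
  by the stated formula; result (X0, X1, X2, X3).\<close>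
definition psi :: "rat \<Rightarrow> rat \<Rightarrow> rat \<Rightarrow> rat \<Rightarrow> rat \<times> rat \<times> rat \<times> rat" where
  "psi m n x y =
     (- (x + m) * (y^2 - m * (x + n)^2),
      2 * y * (x + n) * (x + m),
      - (x + m) * (y^2 + m * (x + n)^2),
      - (x + n) * (y^2 + n * (x + m)^2))"

end

theory Submission
  imports Defs
begin

lemma dblA: fixes x y l x3 m n :: rat
  assumes "y^2 = x*(x+m)*(x+n)" "2*y*l = 3*x^2+2*(m+n)*x+m*n" "x3 = l^2-(m+n)-2*x"
  shows "4*y^2*(x3+m) = (x^2+2*m*x+m*n)^2" "4*y^2*x3 = (x^2-m*n)^2"
    "4*y^2*(x3+n) = (x^2+2*n*x+m*n)^2"
    "x3*(x3+m)*(x3+n) = (y + l*(x3-x))^2"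
  using assms by algebra+

lemma dblB: fixes x y m n :: rat
  assumes "y^2 = -m*(x+n)^2" "x^2+2*m*x+m*n = 0"
  shows "y^2 = (x+m)^2*(2*x+n)"
  using assms by algebra

theorem theorem4p6:
  fixes p q k :: nat and x y :: rat
  assumes "0 < p" and "0 < q"
    and "coprime p q" and "squarefree k"
    and "m = - of_nat (p * k)" and "n = of_nat (q * k)"
    and "on_E m n (Aff x y)"
    and "y \<noteq> 0"
    and "psi m n x y = (X0, X1, X2, X3)"
    and "\<alpha> = X2 / X1" and "\<beta> = X0 / X1" and "\<gamma> = X3 / X1"
    and "a = \<bar>\<gamma>\<bar> + \<bar>\<alpha>\<bar>" and "b = \<bar>\<gamma>\<bar> - \<bar>\<alpha>\<bar>"
  shows "(ec_has_order m n (Aff x y) 4 \<longleftrightarrow> \<alpha>^2 = 0) \<and> (\<alpha>^2 = 0 \<longleftrightarrow> a = b)"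
proof -
  have k0: "k > 0" using assms(4) by (cases k) auto
  have mneg: "m < 0" using assms(1,5) k0 by simp
  have npos: "n > 0" using assms(2,6) k0 by simp
  have cur: "y^2 = x*(x+m)*(x+n)" using assms(7) by (simp add: on_E_def)
  have yy: "y^2 > 0" using assms(8) by simp
  have xm: "x + m \<noteq> 0" and xn: "x + n \<noteq> 0" using cur yy by auto
  have X1: "X1 = 2*y*(x+n)*(x+m)" and X2: "X2 = - (x + m) * (y^2 + m * (x + n)^2)"
    using assms(9) by (auto simp: psi_def)
  have X1nz: "X1 \<noteq> 0" using X1 xm xn assms(8) by simp
  define Dm where "Dm = x^2+2*m*x+m*n"
  have alpha0: "\<alpha>^2 = 0 \<longleftrightarrow> Dm = 0"
  proof -
    have "\<alpha>^2 = 0 \<longleftrightarrow> y^2 + m*(x+n)^2 = 0" using assms(10) X1nz X2 xm by simp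
    also have "y^2 + m*(x+n)^2 = (x+n)*Dm" unfolding cur Dm_def by algebra
    finally show ?thesis using xn by simp
  qed
  have ab: "\<alpha>^2 = 0 \<longleftrightarrow> a = b" using assms(13,14) by auto
  define l where "l = (3 * x^2 + 2 * (m + n) * x + m * n) / (2 * y)"
  define x3 where "x3 = l^2 - (m + n) - x - x"
  define y3 where "y3 = - (y + l * (x3 - x))"
  have l2: "2*y*l = 3*x^2+2*(m+n)*x+m*n" using assms(8) unfolding l_def by simp
  have x3': "x3 = l^2-(m+n)-2*x" unfolding x3_def by simp
  note D = dblA[OF cur l2 x3']
  have e1: "ec_mult m n 1 (Aff x y) = Aff x y" by (simp add: ec_add_def)
  have e2: "ec_mult m n 2 (Aff x y) = Aff x3 y3"
    using assms(8) by (simp add: numeral_eq_Suc ec_add_def Let_def l_def x3_def y3_def)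
  have e3: "ec_mult m n 3 (Aff x y) = ec_add m n (Aff x y) (Aff x3 y3)"
    using e2 by (simp add: numeral_eq_Suc)
  have e4: "ec_mult m n 4 (Aff x y) = ec_add m n (Aff x y) (ec_mult m n 3 (Aff x y))"
    by (simp add: numeral_eq_Suc)
  have cur3: "y3^2 = x3*(x3+m)*(x3+n)" using D(4) unfolding y3_def by (simp add: power2_eq_square algebra_simps)
  have "ec_has_order m n (Aff x y) 4 \<longleftrightarrow> Dm = 0"
  proof
    assume o: "ec_has_order m n (Aff x y) 4"
    have i4: "ec_mult m n 4 (Aff x y) = Inf" and n3: "ec_mult m n 3 (Aff x y) \<noteq> Inf"
      using o unfolding ec_has_order_def by auto
    obtain x4 y4 where a3: "ec_mult m n 3 (Aff x y) = Aff x4 y4" using n3 by (cases "ec_mult m n 3 (Aff x y)") auto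
    have "x4 = x \<and> y4 = -y" using i4 e4 a3
      by (auto simp: ec_add_def Let_def split: if_splits)
    hence a3': "ec_add m n (Aff x y) (Aff x3 y3) = Aff x (-y)" using a3 e3 by simp
    have y30: "y3 = 0"
    proof (cases "x = x3")
      case True
      show ?thesis
      proof (cases "y = - y3")
        case True with \<open>x = x3\<close> a3' show ?thesis by (simp add: ec_add_def)
      next
        case False
        have "ec_add m n (Aff x y) (Aff x y3) = Aff x3 y3" using False
          unfolding ec_add_def by (simp add: Let_def x3_def y3_def l_def)
        with \<open>x = x3\<close> a3' have "y3 = -y" by simp
        with False show ?thesis by simp
      qed
    next
      case False
      define l' where "l' = (y3 - y) / (x3 - x)"
      have d: "x3 - x \<noteq> 0" using False by simp
      from False a3' have "l'^2 - (m+n) - x - x3 = x"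
        by (auto simp: ec_add_def Let_def l'_def split: if_splits)
      hence "l'^2 = l^2" unfolding x3_def by simp
      hence "(l'*(x3-x))^2 = (l*(x3-x))^2" by (simp add: power_mult_distrib)
      moreover have "l'*(x3-x) = y3 - y" using d unfolding l'_def by simp
      moreover have "l*(x3-x) = -(y3+y)" unfolding y3_def by simp
      ultimately have "(y3-y)^2 = (-(y3+y))^2" by simp
      hence "(y3-y)^2 = (y3+y)^2" by (simp add: power2_eq_square algebra_simps)
      hence "4*y*y3 = 0" by (simp add: power2_eq_square algebra_simps)
      thus ?thesis using assms(8) by simp
    qed
    have "x3*(x3+m)*(x3+n) = 0" using cur3 y30 by simp
    hence "x3 = 0 \<or> x3 + m = 0 \<or> x3 + n = 0" by auto
    moreover have "x3 \<noteq> 0"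
    proof
      assume "x3 = 0"
      hence "x^2 - m*n = 0" using D(2) by simp
      moreover have "m*n < 0" using mneg npos by (simp add: mult_neg_pos)
      moreover have "x^2 \<ge> 0" by simp
      ultimately show False by linarith
    qed
    moreover have "x3 + n \<noteq> 0"
    proof
      assume "x3 + n = 0"
      hence h: "x^2+2*n*x+m*n = 0" using D(3) by simp
      have "y^2 = -n*(x+m)^2" using h cur by algebra
      moreover have "n*(x+m)^2 \<ge> 0" using npos by simp
      ultimately show False using yy by linarith
    qed
    ultimately have "x3 + m = 0" by simp
    thus "Dm = 0" using D(1) yy unfolding Dm_def by simp
  next
    assume Dm: "Dm = 0"
    have x3m: "x3 = -m" using D(1) Dm yy unfolding Dm_def by simp
    have y30: "y3 = 0" using cur3 x3m by simp
    have ym: "y^2 = -m*(x+n)^2" using Dm cur unfolding Dm_def by algebra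
    have yB: "y^2 = (x+m)^2*(2*x+n)" using dblB[OF ym] Dm unfolding Dm_def by simp
    have xne: "x \<noteq> -m" using xm by (auto simp: algebra_simps)
    define l' where "l' = (0 - y) / (- m - x)"
    have l'sq: "l'^2 = y^2/(x+m)^2" unfolding l'_def
      by (simp add: power_divide power2_eq_square algebra_simps)
    have x4: "l'^2 - (m+n) - x - (-m) = x"
      using yB xm unfolding l'sq by (simp add: field_simps)
    have e3': "ec_mult m n 3 (Aff x y) = Aff x (-y)"
      using e3 x3m y30 xne x4 by (simp add: ec_add_def Let_def l'_def)
    have "ec_mult m n 4 (Aff x y) = Inf" using e4 e3' by (simp add: ec_add_def)
    moreover have "ec_mult m n j (Aff x y) \<noteq> Inf" if "0 < j" "j < 4" for j
    proof -
      have "j = 1 \<or> j = 2 \<or> j = 3" using that by auto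
      thus ?thesis using e1 e2 e3' by auto
    qed
    ultimately show "ec_has_order m n (Aff x y) 4" unfolding ec_has_order_def by auto
  qed
  thus ?thesis using alpha0 ab by simp
qed

end
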